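(* Let $c_1>0>c_2$, $L=c_1-c_2$, $t_0>0$, with $u,q_1,q_2$ as in the context. For $t\in[0,t_0]$ define $$y_l(t,\xi)=\xi+\ln L-\ln\!\Big(L+\big(c_1e^{-c_1(t-t_0)}-c_1e^{c_1t_0}-c_2e^{-c_2(t-t_0)}+c_2e^{c_2t_0}\big)e^{\xi}\Big),\quad \xi<q_1(0),$$ $$y_r(t,\xi)=\xi-\ln L+\ln\!\Big(L+\big(c_1e^{c_1(t-t_0)}-c_1e^{-c_1t_0}-c_2e^{c_2(t-t_0)}+c_2e^{-c_2t_0}\big)e^{-\xi}\Big),\quad \xi>q_2(0).$$ Then these are well defined, $y_l(0,\xi)=\xi$, $y_r(0,\xi)=\xi$, $y_l(t,\xi)<q_1(t)$, $y_r(t,\xi)>q_2(t)$, and for $0\le t<t_0$, $$\partial_t y_l(t,\xi)=u(t,y_l(t,\xi)),\qquad \partial_t y_r(t,\xi)=u(t,y_r(t,\xi)).$$ Moreover $u(t,y_l(t,\xi))$ equals $$\frac{\big(c_1^2e^{-c_1(t-t_0)}-c_2^2e^{-c_2(t-t_0)}\big)e^{\xi}}{L+\big(c_1e^{-c_1(t-t_0)}-c_1e^{c_1t_0}-c_2e^{-c_2(t-t_0)}+c_2e^{c_2t_0}\big)e^{\xi}} .$$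
   Context: For $t\neq t_0$ define $$p_1(t)=\frac{c_1-c_2e^{L(t-t_0)}}{1-e^{L(t-t_0)}},\qquad p_2(t)=\frac{c_2-c_1e^{L(t-t_0)}}{1-e^{L(t-t_0)}},$$ and for all $t$ define $$q_1(t)=\ln L+c_1(t-t_0)-\ln\big(c_1-c_2e^{L(t-t_0)}\big),\qquad q_2(t)=-\ln L+c_2(t-t_0)+\ln\big(c_1e^{L(t-t_0)}-c_2\big).$$ Set $u(t,x)=p_1(t)e^{-|x-q_1(t)|}+p_2(t)e^{-|x-q_2(t)|}$ for $x\in\mathbb R$, $t<t_0$. *)

theory Defs
  imports "HOL-Analysis.Analysis"
begin

definition p1 :: "real \<Rightarrow> real \<Rightarrow> real \<Rightarrow> real \<Rightarrow> real" where
  "p1 c1 c2 t0 t = (c1 - c2 * exp ((c1 - c2) * (t - t0))) / (1 - exp ((c1 - c2) * (t - t0)))"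

definition p2 :: "real \<Rightarrow> real \<Rightarrow> real \<Rightarrow> real \<Rightarrow> real" where
  "p2 c1 c2 t0 t = (c2 - c1 * exp ((c1 - c2) * (t - t0))) / (1 - exp ((c1 - c2) * (t - t0)))"

definition q1 :: "real \<Rightarrow> real \<Rightarrow> real \<Rightarrow> real \<Rightarrow> real" where
  "q1 c1 c2 t0 t = ln (c1 - c2) + c1 * (t - t0) - ln (c1 - c2 * exp ((c1 - c2) * (t - t0)))"

definition q2 :: "real \<Rightarrow> real \<Rightarrow> real \<Rightarrow> real \<Rightarrow> real" where
  "q2 c1 c2 t0 t = - ln (c1 - c2) + c2 * (t - t0) + ln (c1 * exp ((c1 - c2) * (t - t0)) - c2)"

definition u :: "real \<Rightarrow> real \<Rightarrow> real \<Rightarrow> real \<Rightarrow> real \<Rightarrow> real" where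
  "u c1 c2 t0 t x = p1 c1 c2 t0 t * exp (- \<bar>x - q1 c1 c2 t0 t\<bar>)
                  + p2 c1 c2 t0 t * exp (- \<bar>x - q2 c1 c2 t0 t\<bar>)"

definition yl_arg :: "real \<Rightarrow> real \<Rightarrow> real \<Rightarrow> real \<Rightarrow> real \<Rightarrow> real" where
  "yl_arg c1 c2 t0 t \<xi> = (c1 - c2) + (c1 * exp (- c1 * (t - t0)) - c1 * exp (c1 * t0)
       - c2 * exp (- c2 * (t - t0)) + c2 * exp (c2 * t0)) * exp \<xi>"

definition yr_arg :: "real \<Rightarrow> real \<Rightarrow> real \<Rightarrow> real \<Rightarrow> real \<Rightarrow> real" where
  "yr_arg c1 c2 t0 t \<xi> = (c1 - c2) + (c1 * exp (c1 * (t - t0)) - c1 * exp (- c1 * t0)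
       - c2 * exp (c2 * (t - t0)) + c2 * exp (- c2 * t0)) * exp (- \<xi>)"

definition yl :: "real \<Rightarrow> real \<Rightarrow> real \<Rightarrow> real \<Rightarrow> real \<Rightarrow> real" where
  "yl c1 c2 t0 t \<xi> = \<xi> + ln (c1 - c2) - ln (yl_arg c1 c2 t0 t \<xi>)"

definition yr :: "real \<Rightarrow> real \<Rightarrow> real \<Rightarrow> real \<Rightarrow> real \<Rightarrow> real" where
  "yr c1 c2 t0 t \<xi> = \<xi> - ln (c1 - c2) + ln (yr_arg c1 c2 t0 t \<xi>)"

end

theory Submission
  imports Defs
begin


lemma exp_q1:
  fixes c1 c2 t0 t :: real
  assumes "c1 > 0" "c2 < 0"
  shows "exp (q1 c1 c2 t0 t) = (c1-c2)*exp(c1*(t-t0))/(c1 - c2*exp((c1-c2)*(t-t0)))"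
proof -
  have "c1 - c2*exp((c1-c2)*(t-t0)) > 0" using assms
    by (smt (verit) exp_gt_zero mult_neg_pos)
  then show ?thesis using assms unfolding q1_def by (simp add: exp_add exp_diff)
qed

lemma exp_q2:
  fixes c1 c2 t0 t :: real
  assumes "c1 > 0" "c2 < 0"
  shows "exp (q2 c1 c2 t0 t) = exp(c2*(t-t0))*(c1*exp((c1-c2)*(t-t0)) - c2)/(c1-c2)"
proof -
  have "c1*exp((c1-c2)*(t-t0)) - c2 > 0" using assms
    by (smt (verit) exp_gt_zero mult_pos_pos)
  then show ?thesis using assms unfolding q2_def by (simp add: exp_add exp_diff exp_minus field_simps)
qed

lemma q1_le_q2:
  fixes c1 c2 t0 t :: real
  assumes c1: "c1 > 0" and c2: "c2 < 0"
  shows "q1 c1 c2 t0 t \<le> q2 c1 c2 t0 t"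
proof -
  define a where "a = exp(c1*(t-t0))"
  define b where "b = exp(c2*(t-t0))"
  define L where "L = c1 - c2"
  have pos: "a>0" "b>0" "L>0" using c1 c2 by (auto simp: a_def b_def L_def)
  have eE: "exp((c1-c2)*(t-t0)) = a/b" by (simp add: a_def b_def left_diff_distrib exp_diff)
  have d1: "c1 - c2*(a/b) > 0" using pos c1 c2 by (smt (verit) divide_pos_pos mult_neg_pos)
  have d2: "c1*(a/b) - c2 > 0" using pos c1 c2 by (smt (verit) divide_pos_pos mult_pos_pos)
  have key: "L*L*a*b \<le> (c1*b - c2*a)*(c1*a - c2*b)"
  proof -
    have "(c1*b - c2*a)*(c1*a - c2*b) - L*L*a*b = (-c1*c2)*(a-b)^2"
      by (simp add: L_def power2_eq_square algebra_simps)
    moreover have "(-c1*c2)*(a-b)^2 \<ge> 0" using mult_nonneg_nonneg[OF less_imp_le[OF mult_pos_pos[of c1 "-c2"]] zero_le_power2[of "a-b"]] c1 c2 by simp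
    ultimately show ?thesis by linarith
  qed
  have pp: "c1*b - c2*a > 0" using d1 pos by (simp add: field_simps)
  have eq1: "exp (q1 c1 c2 t0 t) = L*a*b/(c1*b - c2*a)"
  proof -
    have "exp (q1 c1 c2 t0 t) = L*a/(c1 - c2*(a/b))"
      by (simp only: exp_q1[OF c1 c2] eE a_def b_def L_def)
    then show ?thesis using pos pp by (simp add: field_simps)
  qed
  have eq2: "exp (q2 c1 c2 t0 t) = (c1*a - c2*b)/L"
  proof -
    have "exp (q2 c1 c2 t0 t) = b*(c1*(a/b) - c2)/L"
      by (simp only: exp_q2[OF c1 c2] eE a_def b_def L_def)
    moreover have "b*(c1*(a/b) - c2) = c1*a - c2*b" using pos by (simp add: field_simps)
    ultimately show ?thesis by simp
  qed
  have "L*a*b/(c1*b - c2*a) \<le> (c1*a - c2*b)/L"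
    using key pos pp by (simp add: divide_simps mult.commute mult.left_commute)
  then have "exp (q1 c1 c2 t0 t) \<le> exp (q2 c1 c2 t0 t)" using eq1 eq2 by simp
  then show ?thesis by simp
qed

lemma yl_part:
  fixes c1 c2 t0 t \<xi> :: real
  assumes c1: "c1 > 0" and c2: "c2 < 0" and xi: "\<xi> < q1 c1 c2 t0 0"
  shows "yl_arg c1 c2 t0 t \<xi> > 0 \<and> yl c1 c2 t0 t \<xi> < q1 c1 c2 t0 t"
proof -
  define a where "a = exp(c1*(t-t0))"
  define b where "b = exp(c2*(t-t0))"
  define a0 where "a0 = exp(c1*t0)"
  define b0 where "b0 = exp(c2*t0)"
  define x where "x = exp \<xi>"
  define L where "L = c1 - c2"
  have pos: "a>0" "b>0" "a0>0" "b0>0" "x>0" "L>0" using c1 c2 by (auto simp: a_def b_def a0_def b0_def x_def L_def)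
  have e1: "exp(-c1*(t-t0)) = 1/a" "exp(-c2*(t-t0)) = 1/b"
    by (simp_all add: a_def b_def exp_minus inverse_eq_divide)
  have eE: "exp((c1-c2)*(t-t0)) = a/b" by (simp add: a_def b_def left_diff_distrib exp_diff)
  have eq0: "exp (q1 c1 c2 t0 0) = L/(c1*a0 - c2*b0)"
  proof -
    have "exp (q1 c1 c2 t0 0) = L*(1/a0)/(c1 - c2*(b0/a0))"
      by (simp add: exp_q1[OF c1 c2] L_def a0_def b0_def exp_minus inverse_eq_divide left_diff_distrib exp_diff)
    then show ?thesis using pos by (simp add: field_simps)
  qed
  have B: "c1*a0 - c2*b0 > 0" using pos c1 c2 by (smt (verit) mult_neg_pos mult_pos_pos)
  have xB: "x*(c1*a0 - c2*b0) < L"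
  proof -
    have "x < L/(c1*a0 - c2*b0)" using xi eq0 unfolding x_def by (metis exp_less_cancel_iff)
    then show ?thesis using B by (simp add: field_simps)
  qed
  have pab: "c1/a - c2/b > 0" using pos c1 c2 by (smt (verit) divide_neg_pos divide_pos_pos)
  have arg: "yl_arg c1 c2 t0 t \<xi> = L + (c1/a - c2/b)*x - (c1*a0 - c2*b0)*x"
    unfolding yl_arg_def e1 by (simp add: a0_def b0_def x_def L_def algebra_simps)
  have argpos: "yl_arg c1 c2 t0 t \<xi> > (c1/a - c2/b)*x" using arg xB by (simp add: algebra_simps)
  have argp: "yl_arg c1 c2 t0 t \<xi> > 0" using argpos pab pos by (smt (verit) mult_pos_pos)
  have eyl: "exp (yl c1 c2 t0 t \<xi>) = x*L/yl_arg c1 c2 t0 t \<xi>"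
    unfolding yl_def using argp pos by (simp add: exp_add exp_diff x_def L_def)
  have eq1: "exp (q1 c1 c2 t0 t) = L*a/(c1 - c2*(a/b))"
    by (simp only: exp_q1[OF c1 c2] eE a_def b_def L_def)
  have "c1 - c2*(a/b) = a*(c1/a - c2/b)" using pos by (simp add: field_simps)
  then have eq1': "exp (q1 c1 c2 t0 t) = L/(c1/a - c2/b)" using eq1 pos by simp
  have "x*L/yl_arg c1 c2 t0 t \<xi> < L/(c1/a - c2/b)"
    using argpos argp pab pos by (simp add: divide_simps mult.commute mult.left_commute)
  then have "exp (yl c1 c2 t0 t \<xi>) < exp (q1 c1 c2 t0 t)" using eyl eq1' by simp
  then show ?thesis using argp by simp
qed

lemma yr_part:
  fixes c1 c2 t0 t \<xi> :: real
  assumes c1: "c1 > 0" and c2: "c2 < 0" and xi: "\<xi> > q2 c1 c2 t0 0"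
  shows "yr_arg c1 c2 t0 t \<xi> > 0 \<and> yr c1 c2 t0 t \<xi> > q2 c1 c2 t0 t"
proof -
  define a where "a = exp(c1*(t-t0))"
  define b where "b = exp(c2*(t-t0))"
  define a0 where "a0 = exp(c1*t0)"
  define b0 where "b0 = exp(c2*t0)"
  define x where "x = exp \<xi>"
  define L where "L = c1 - c2"
  have pos: "a>0" "b>0" "a0>0" "b0>0" "x>0" "L>0" using c1 c2 by (auto simp: a_def b_def a0_def b0_def x_def L_def)
  have eE: "exp((c1-c2)*(t-t0)) = a/b" by (simp add: a_def b_def left_diff_distrib exp_diff)
  have eq0: "exp (q2 c1 c2 t0 0) = (c1/a0 - c2/b0)/L"
  proof -
    have "exp (q2 c1 c2 t0 0) = (1/b0)*(c1*(b0/a0) - c2)/L"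
      by (simp add: exp_q2[OF c1 c2] L_def a0_def b0_def exp_minus inverse_eq_divide left_diff_distrib exp_diff)
    then show ?thesis using pos by (simp add: field_simps)
  qed
  have xD: "c1/a0 - c2/b0 < L*x"
  proof -
    have "(c1/a0 - c2/b0)/L < x" using xi eq0 unfolding x_def by (metis exp_less_cancel_iff)
    then show ?thesis using pos by (simp add: field_simps)
  qed
  have pab: "c1*a - c2*b > 0" using pos c1 c2 by (smt (verit) mult_neg_pos mult_pos_pos)
  have arg: "x * yr_arg c1 c2 t0 t \<xi> = L*x + (c1*a - c2*b) - (c1/a0 - c2/b0)"
  proof -
    have e: "exp(-c1*t0) = 1/a0" "exp(-c2*t0) = 1/b0" "exp(-\<xi>) = 1/x"
      by (simp_all add: a0_def b0_def x_def exp_minus inverse_eq_divide)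
    have A: "yr_arg c1 c2 t0 t \<xi> = L + (c1*a - c1/a0 - c2*b + c2/b0)*(1/x)"
      by (simp only: yr_arg_def e a_def b_def L_def times_divide_eq_right mult_1_right)
    have B: "\<And>K. x * (L + K*(1/x)) = L*x + K"
      using pos by (simp add: field_simps)
    have "x * yr_arg c1 c2 t0 t \<xi> = L*x + (c1*a - c1/a0 - c2*b + c2/b0)" unfolding A by (rule B)
    then show ?thesis by linarith
  qed
  have argpos: "x * yr_arg c1 c2 t0 t \<xi> > c1*a - c2*b" using arg xD by simp
  have "0 < x * yr_arg c1 c2 t0 t \<xi>" using argpos pab by linarith
  then have argp: "yr_arg c1 c2 t0 t \<xi> > 0" using zero_less_mult_pos pos(5) by blast
  have eyr: "exp (yr c1 c2 t0 t \<xi>) = x*yr_arg c1 c2 t0 t \<xi>/L"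
    unfolding yr_def using argp pos by (simp add: exp_add exp_diff x_def L_def)
  have eq2: "exp (q2 c1 c2 t0 t) = b*(c1*(a/b) - c2)/L"
    by (simp only: exp_q2[OF c1 c2] eE a_def b_def L_def)
  have "b*(c1*(a/b) - c2) = c1*a - c2*b" using pos by (simp add: field_simps)
  then have eq2': "exp (q2 c1 c2 t0 t) = (c1*a - c2*b)/L" using eq2 by simp
  have "exp (yr c1 c2 t0 t \<xi>) > exp (q2 c1 c2 t0 t)" unfolding eyr eq2'
    using argpos pos(6) by (rule divide_strict_right_mono)
  then show ?thesis using argp by simp
qed

lemma yl_deriv:
  fixes c1 c2 t0 t \<xi> :: real
  assumes c1: "c1 > 0" and c2: "c2 < 0" and xi: "\<xi> < q1 c1 c2 t0 0"
  shows "((\<lambda>s. yl c1 c2 t0 s \<xi>) has_real_derivative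
     ((c1^2 * exp (- c1 * (t - t0)) - c2^2 * exp (- c2 * (t - t0))) * exp \<xi>) / yl_arg c1 c2 t0 t \<xi>) (at t)"
proof -
  have argp: "yl_arg c1 c2 t0 t \<xi> > 0" using yl_part[OF c1 c2 xi] by blast
  have d: "((\<lambda>s. yl_arg c1 c2 t0 s \<xi>) has_real_derivative
     (-((c1^2 * exp (- c1 * (t - t0)) - c2^2 * exp (- c2 * (t - t0))) * exp \<xi>))) (at t)"
    unfolding yl_arg_def
    apply (rule derivative_eq_intros refl)+
    apply (simp add: power2_eq_square algebra_simps)
    done
  have l: "((\<lambda>s. ln (yl_arg c1 c2 t0 s \<xi>)) has_real_derivative
     inverse (yl_arg c1 c2 t0 t \<xi>) * (-((c1^2 * exp (- c1 * (t - t0)) - c2^2 * exp (- c2 * (t - t0))) * exp \<xi>))) (at t)"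
    by (rule DERIV_chain2[OF DERIV_ln[OF argp] d])
  have "((\<lambda>s. (\<xi> + ln (c1 - c2)) - ln (yl_arg c1 c2 t0 s \<xi>)) has_real_derivative
     0 - inverse (yl_arg c1 c2 t0 t \<xi>) * (-((c1^2 * exp (- c1 * (t - t0)) - c2^2 * exp (- c2 * (t - t0))) * exp \<xi>))) (at t)"
    by (rule DERIV_diff[OF DERIV_const l])
  then show ?thesis unfolding yl_def by (simp add: divide_inverse mult.commute)
qed

lemma yr_deriv:
  fixes c1 c2 t0 t \<xi> :: real
  assumes c1: "c1 > 0" and c2: "c2 < 0" and xi: "\<xi> > q2 c1 c2 t0 0"
  shows "((\<lambda>s. yr c1 c2 t0 s \<xi>) has_real_derivative
     ((c1^2 * exp (c1 * (t - t0)) - c2^2 * exp (c2 * (t - t0))) * exp (-\<xi>)) / yr_arg c1 c2 t0 t \<xi>) (at t)"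
proof -
  have argp: "yr_arg c1 c2 t0 t \<xi> > 0" using yr_part[OF c1 c2 xi] by blast
  have d: "((\<lambda>s. yr_arg c1 c2 t0 s \<xi>) has_real_derivative
     ((c1^2 * exp (c1 * (t - t0)) - c2^2 * exp (c2 * (t - t0))) * exp (-\<xi>))) (at t)"
    unfolding yr_arg_def
    apply (rule derivative_eq_intros refl)+
    apply (simp add: power2_eq_square algebra_simps)
    done
  have l: "((\<lambda>s. ln (yr_arg c1 c2 t0 s \<xi>)) has_real_derivative
     inverse (yr_arg c1 c2 t0 t \<xi>) * ((c1^2 * exp (c1 * (t - t0)) - c2^2 * exp (c2 * (t - t0))) * exp (-\<xi>))) (at t)"
    by (rule DERIV_chain2[OF DERIV_ln[OF argp] d])
  have "((\<lambda>s. (\<xi> - ln (c1 - c2)) + ln (yr_arg c1 c2 t0 s \<xi>)) has_real_derivative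
     0 + inverse (yr_arg c1 c2 t0 t \<xi>) * ((c1^2 * exp (c1 * (t - t0)) - c2^2 * exp (c2 * (t - t0))) * exp (-\<xi>))) (at t)"
    by (rule DERIV_add[OF DERIV_const l])
  then show ?thesis unfolding yr_def by (simp add: divide_inverse mult.commute)
qed

lemma alg_l:
  fixes a b x g c1 c2 :: real
  assumes "a > 0" "b > 0" "a < b" "x > 0" "g > 0" "c1 > 0" "c2 < 0"
  shows "(c1 - c2*(a/b))/(1 - a/b) * (x*(c1-c2)/g) / ((c1-c2)/(c1/a - c2/b))
       + (c2 - c1*(a/b))/(1 - a/b) * (x*(c1-c2)/g) / ((c1*a - c2*b)/(c1-c2))
       = (c1^2*(1/a) - c2^2*(1/b))*x/g"
proof -
  define S where "S = c1*b - c2*a"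
  define T where "T = c1*a - c2*b"
  define D where "D = b - a"
  define L where "L = c1 - c2"
  have p: "T > 0" "S > 0" "D > 0" "L > 0"
    using assms unfolding S_def T_def D_def L_def by (smt (verit) mult_neg_pos mult_pos_pos)+
  have e1: "c1/a - c2/b = S/(a*b)" using assms unfolding S_def by (simp add: field_simps)
  have e2: "1 - a/b = D/b" using assms unfolding D_def by (simp add: field_simps)
  have e3: "c1 - c2*(a/b) = S/b" using assms unfolding S_def by (simp add: field_simps)
  have e4: "c2 - c1*(a/b) = -T/b" using assms unfolding T_def by (simp add: field_simps)
  have e5: "c1^2*(1/a) - c2^2*(1/b) = (c1^2*b - c2^2*a)/(a*b)" using assms by (simp add: field_simps)
  have poly: "S^2 - L^2*(a*b) = D*(c1^2*b - c2^2*a)"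
    unfolding S_def L_def D_def by (simp add: power2_eq_square algebra_simps)
  have t1: "(S/b)/(D/b) * (x*L/g) / (L/(S/(a*b))) = x*S^2/(g*D*(a*b))"
    using assms p by (simp add: field_simps power2_eq_square)
  have t2: "(-T/b)/(D/b) * (x*L/g) / (T/L) = - (x*L^2/(g*D))"
    using assms p by (simp add: field_simps power2_eq_square)
  have t3: "x*S^2/(g*D*(a*b)) - (x*L^2/(g*D)) = x*(S^2 - L^2*(a*b))/(g*D*(a*b))"
    using assms p by (simp add: field_simps power2_eq_square)
  have t4: "x*(D*(c1^2*b - c2^2*a))/(g*D*(a*b)) = (c1^2*b - c2^2*a)/(a*b)*x/g"
    using assms p by (simp add: field_simps)
  show ?thesis unfolding e1 e2 e3 e4 e5 L_def[symmetric] T_def[symmetric] t1 t2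
    using t3 t4 poly by simp
qed

lemma alg_r:
  fixes a b x g c1 c2 :: real
  assumes "a > 0" "b > 0" "a < b" "x > 0" "g > 0" "c1 > 0" "c2 < 0"
  shows "(c1 - c2*(a/b))/(1 - a/b) * ((c1-c2)/(c1/a - c2/b)) / (x*g/(c1-c2))
       + (c2 - c1*(a/b))/(1 - a/b) * ((c1*a - c2*b)/(c1-c2)) / (x*g/(c1-c2))
       = (c1^2*a - c2^2*b)*(1/x)/g"
proof -
  define S where "S = c1*b - c2*a"
  define T where "T = c1*a - c2*b"
  define D where "D = b - a"
  define L where "L = c1 - c2"
  have p: "T > 0" "S > 0" "D > 0" "L > 0"
    using assms unfolding S_def T_def D_def L_def by (smt (verit) mult_neg_pos mult_pos_pos)+
  have e1: "c1/a - c2/b = S/(a*b)" using assms unfolding S_def by (simp add: field_simps)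
  have e2: "1 - a/b = D/b" using assms unfolding D_def by (simp add: field_simps)
  have e3: "c1 - c2*(a/b) = S/b" using assms unfolding S_def by (simp add: field_simps)
  have e4: "c2 - c1*(a/b) = -T/b" using assms unfolding T_def by (simp add: field_simps)
  have poly: "L^2*(a*b) - T^2 = D*(c1^2*a - c2^2*b)"
    unfolding T_def L_def D_def by (simp add: power2_eq_square algebra_simps)
  have t1: "(S/b)/(D/b) * (L/(S/(a*b))) / (x*g/L) = L^2*(a*b)/(D*(x*g))"
    using assms p by (simp add: field_simps power2_eq_square)
  have t2: "(-T/b)/(D/b) * (T/L) / (x*g/L) = - (T^2/(D*(x*g)))"
    using assms p by (simp add: field_simps power2_eq_square)
  have t3: "L^2*(a*b)/(D*(x*g)) - T^2/(D*(x*g)) = (L^2*(a*b) - T^2)/(D*(x*g))"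
    by (simp add: diff_divide_distrib)
  have t4: "(D*(c1^2*a - c2^2*b))/(D*(x*g)) = (c1^2*a - c2^2*b)*(1/x)/g"
    using assms p by (simp add: field_simps)
  show ?thesis unfolding e1 e2 e3 e4 L_def[symmetric] T_def[symmetric] t1 t2
    using t3 t4 poly by simp
qed

lemma yl_u:
  fixes c1 c2 t0 t \<xi> :: real
  assumes c1: "c1 > 0" and c2: "c2 < 0" and xi: "\<xi> < q1 c1 c2 t0 0" and tt: "t < t0"
  shows "u c1 c2 t0 t (yl c1 c2 t0 t \<xi>) =
     ((c1^2 * exp (- c1 * (t - t0)) - c2^2 * exp (- c2 * (t - t0))) * exp \<xi>) / yl_arg c1 c2 t0 t \<xi>"
proof -
  define a where "a = exp(c1*(t-t0))"
  define b where "b = exp(c2*(t-t0))"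
  define x where "x = exp \<xi>"
  have pos: "a>0" "b>0" "x>0" by (auto simp: a_def b_def x_def)
  have ab: "a < b" unfolding a_def b_def using c1 c2 tt
    by (simp add: mult_strict_right_mono_neg)
  have eE: "exp((c1-c2)*(t-t0)) = a/b" by (simp add: a_def b_def left_diff_distrib exp_diff)
  have eq1: "exp (q1 c1 c2 t0 t) = (c1-c2)/(c1/a - c2/b)"
  proof -
    have "exp (q1 c1 c2 t0 t) = (c1-c2)*a/(c1 - c2*(a/b))"
      by (simp only: exp_q1[OF c1 c2] eE a_def b_def)
    moreover have "c1 - c2*(a/b) = a*(c1/a - c2/b)" using pos by (simp add: field_simps)
    ultimately show ?thesis using pos by simp
  qed
  have eq2: "exp (q2 c1 c2 t0 t) = (c1*a - c2*b)/(c1-c2)"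
  proof -
    have "exp (q2 c1 c2 t0 t) = b*(c1*(a/b) - c2)/(c1-c2)"
      by (simp only: exp_q2[OF c1 c2] eE a_def b_def)
    moreover have "b*(c1*(a/b) - c2) = c1*a - c2*b" using pos by (simp add: field_simps)
    ultimately show ?thesis by simp
  qed
  have P1: "p1 c1 c2 t0 t = (c1 - c2*(a/b))/(1 - a/b)" unfolding p1_def eE ..
  have P2: "p2 c1 c2 t0 t = (c2 - c1*(a/b))/(1 - a/b)" unfolding p2_def eE ..
  have qq: "q1 c1 c2 t0 t \<le> q2 c1 c2 t0 t" by (rule q1_le_q2[OF c1 c2])
  have yp: "yl_arg c1 c2 t0 t \<xi> > 0" "yl c1 c2 t0 t \<xi> < q1 c1 c2 t0 t" using yl_part[OF c1 c2 xi] by auto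
  have eyl: "exp (yl c1 c2 t0 t \<xi>) = x*(c1-c2)/yl_arg c1 c2 t0 t \<xi>"
    unfolding yl_def using yp c1 c2 by (simp add: exp_add exp_diff x_def)
  have u1: "exp (- \<bar>yl c1 c2 t0 t \<xi> - q1 c1 c2 t0 t\<bar>) = exp (yl c1 c2 t0 t \<xi>) / exp (q1 c1 c2 t0 t)"
    using yp by (simp add: exp_diff[symmetric])
  have u2: "exp (- \<bar>yl c1 c2 t0 t \<xi> - q2 c1 c2 t0 t\<bar>) = exp (yl c1 c2 t0 t \<xi>) / exp (q2 c1 c2 t0 t)"
    using yp qq by (simp add: exp_diff[symmetric])
  have e1: "exp(-c1*(t-t0)) = 1/a" "exp(-c2*(t-t0)) = 1/b"
    by (simp_all add: a_def b_def exp_minus inverse_eq_divide)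
  have "u c1 c2 t0 t (yl c1 c2 t0 t \<xi>) =
     (c1 - c2*(a/b))/(1 - a/b) * (x*(c1-c2)/yl_arg c1 c2 t0 t \<xi>) / ((c1-c2)/(c1/a - c2/b))
       + (c2 - c1*(a/b))/(1 - a/b) * (x*(c1-c2)/yl_arg c1 c2 t0 t \<xi>) / ((c1*a - c2*b)/(c1-c2))"
    unfolding u_def u1 u2 eyl eq1 eq2 P1 P2 by (simp add: ac_simps)
  also have "\<dots> = (c1^2*(1/a) - c2^2*(1/b))*x/yl_arg c1 c2 t0 t \<xi>"
    by (rule alg_l[OF pos(1,2) ab pos(3) yp(1) c1 c2])
  finally show ?thesis unfolding e1 x_def .
qed

lemma yr_u:
  fixes c1 c2 t0 t \<xi> :: real
  assumes c1: "c1 > 0" and c2: "c2 < 0" and xi: "\<xi> > q2 c1 c2 t0 0" and tt: "t < t0"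
  shows "u c1 c2 t0 t (yr c1 c2 t0 t \<xi>) =
     ((c1^2 * exp (c1 * (t - t0)) - c2^2 * exp (c2 * (t - t0))) * exp (-\<xi>)) / yr_arg c1 c2 t0 t \<xi>"
proof -
  define a where "a = exp(c1*(t-t0))"
  define b where "b = exp(c2*(t-t0))"
  define x where "x = exp \<xi>"
  have pos: "a>0" "b>0" "x>0" by (auto simp: a_def b_def x_def)
  have ab: "a < b" unfolding a_def b_def using c1 c2 tt
    by (simp add: mult_strict_right_mono_neg)
  have eE: "exp((c1-c2)*(t-t0)) = a/b" by (simp add: a_def b_def left_diff_distrib exp_diff)
  have eq1: "exp (q1 c1 c2 t0 t) = (c1-c2)/(c1/a - c2/b)"
  proof -
    have "exp (q1 c1 c2 t0 t) = (c1-c2)*a/(c1 - c2*(a/b))"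
      by (simp only: exp_q1[OF c1 c2] eE a_def b_def)
    moreover have "c1 - c2*(a/b) = a*(c1/a - c2/b)" using pos by (simp add: field_simps)
    ultimately show ?thesis using pos by simp
  qed
  have eq2: "exp (q2 c1 c2 t0 t) = (c1*a - c2*b)/(c1-c2)"
  proof -
    have "exp (q2 c1 c2 t0 t) = b*(c1*(a/b) - c2)/(c1-c2)"
      by (simp only: exp_q2[OF c1 c2] eE a_def b_def)
    moreover have "b*(c1*(a/b) - c2) = c1*a - c2*b" using pos by (simp add: field_simps)
    ultimately show ?thesis by simp
  qed
  have P1: "p1 c1 c2 t0 t = (c1 - c2*(a/b))/(1 - a/b)" unfolding p1_def eE ..
  have P2: "p2 c1 c2 t0 t = (c2 - c1*(a/b))/(1 - a/b)" unfolding p2_def eE ..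
  have qq: "q1 c1 c2 t0 t \<le> q2 c1 c2 t0 t" by (rule q1_le_q2[OF c1 c2])
  have yp: "yr_arg c1 c2 t0 t \<xi> > 0" "yr c1 c2 t0 t \<xi> > q2 c1 c2 t0 t" using yr_part[OF c1 c2 xi] by auto
  have eyr: "exp (yr c1 c2 t0 t \<xi>) = x*yr_arg c1 c2 t0 t \<xi>/(c1-c2)"
    unfolding yr_def using yp c1 c2 by (simp add: exp_add exp_diff x_def)
  have u1: "exp (- \<bar>yr c1 c2 t0 t \<xi> - q1 c1 c2 t0 t\<bar>) = exp (q1 c1 c2 t0 t) / exp (yr c1 c2 t0 t \<xi>)"
    using yp qq by (simp add: exp_diff[symmetric])
  have u2: "exp (- \<bar>yr c1 c2 t0 t \<xi> - q2 c1 c2 t0 t\<bar>) = exp (q2 c1 c2 t0 t) / exp (yr c1 c2 t0 t \<xi>)"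
    using yp by (simp add: exp_diff[symmetric])
  have e1: "exp(-\<xi>) = 1/x"
    by (simp_all add: x_def exp_minus inverse_eq_divide)
  have "u c1 c2 t0 t (yr c1 c2 t0 t \<xi>) =
     (c1 - c2*(a/b))/(1 - a/b) * ((c1-c2)/(c1/a - c2/b)) / (x*yr_arg c1 c2 t0 t \<xi>/(c1-c2))
       + (c2 - c1*(a/b))/(1 - a/b) * ((c1*a - c2*b)/(c1-c2)) / (x*yr_arg c1 c2 t0 t \<xi>/(c1-c2))"
    unfolding u_def u1 u2 eyr eq1 eq2 P1 P2 by (simp add: ac_simps)
  also have "\<dots> = (c1^2*a - c2^2*b)*(1/x)/yr_arg c1 c2 t0 t \<xi>"
    by (rule alg_r[OF pos(1,2) ab pos(3) yp(1) c1 c2])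
  finally show ?thesis unfolding e1 a_def b_def .
qed


theorem mainTheorem5:
  fixes c1 c2 t0 :: real
  assumes "c1 > 0" and "0 > c2" and "t0 > 0"
  shows
   "(\<forall>t\<in>{0..t0}. \<forall>\<xi>. \<xi> < q1 c1 c2 t0 0 \<longrightarrow>
        yl_arg c1 c2 t0 t \<xi> > 0 \<and> yl c1 c2 t0 t \<xi> < q1 c1 c2 t0 t)
  \<and> (\<forall>t\<in>{0..t0}. \<forall>\<xi>. \<xi> > q2 c1 c2 t0 0 \<longrightarrow>
        yr_arg c1 c2 t0 t \<xi> > 0 \<and> yr c1 c2 t0 t \<xi> > q2 c1 c2 t0 t)
  \<and> (\<forall>\<xi>. \<xi> < q1 c1 c2 t0 0 \<longrightarrow> yl c1 c2 t0 0 \<xi> = \<xi>)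
  \<and> (\<forall>\<xi>. \<xi> > q2 c1 c2 t0 0 \<longrightarrow> yr c1 c2 t0 0 \<xi> = \<xi>)
  \<and> (\<forall>t\<in>{0..<t0}. \<forall>\<xi>. \<xi> < q1 c1 c2 t0 0 \<longrightarrow>
        ((\<lambda>s. yl c1 c2 t0 s \<xi>) has_real_derivative u c1 c2 t0 t (yl c1 c2 t0 t \<xi>))
          (at t within {0..t0}))
  \<and> (\<forall>t\<in>{0..<t0}. \<forall>\<xi>. \<xi> > q2 c1 c2 t0 0 \<longrightarrow>
        ((\<lambda>s. yr c1 c2 t0 s \<xi>) has_real_derivative u c1 c2 t0 t (yr c1 c2 t0 t \<xi>))
          (at t within {0..t0}))
  \<and> (\<forall>t\<in>{0..<t0}. \<forall>\<xi>. \<xi> < q1 c1 c2 t0 0 \<longrightarrow>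
        u c1 c2 t0 t (yl c1 c2 t0 t \<xi>) =
          ((c1^2 * exp (- c1 * (t - t0)) - c2^2 * exp (- c2 * (t - t0))) * exp \<xi>)
          / ((c1 - c2) + (c1 * exp (- c1 * (t - t0)) - c1 * exp (c1 * t0)
               - c2 * exp (- c2 * (t - t0)) + c2 * exp (c2 * t0)) * exp \<xi>))"
proof (intro conjI ballI allI impI)
  note c1 = assms(1) and c2 = assms(2)
  fix t \<xi> assume "\<xi> < q1 c1 c2 t0 0"
  then show "yl_arg c1 c2 t0 t \<xi> > 0" "yl c1 c2 t0 t \<xi> < q1 c1 c2 t0 t" using yl_part[OF c1 c2] by auto
next
  note c1 = assms(1) and c2 = assms(2)
  fix t \<xi> assume "\<xi> > q2 c1 c2 t0 0"
  then show "yr_arg c1 c2 t0 t \<xi> > 0" "yr c1 c2 t0 t \<xi> > q2 c1 c2 t0 t" using yr_part[OF c1 c2] by auto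
next
  fix \<xi> :: real
  have e: "-c1*(0-t0) = c1*t0" "-c2*(0-t0) = c2*t0" by simp_all
  have "yl_arg c1 c2 t0 0 \<xi> = c1 - c2" unfolding yl_arg_def e by simp
  then show "yl c1 c2 t0 0 \<xi> = \<xi>" unfolding yl_def by simp
next
  fix \<xi> :: real
  have e: "c1*(0-t0) = -c1*t0" "c2*(0-t0) = -c2*t0" by simp_all
  have "yr_arg c1 c2 t0 0 \<xi> = c1 - c2" unfolding yr_arg_def e by simp
  then show "yr c1 c2 t0 0 \<xi> = \<xi>" unfolding yr_def by simp
next
  note c1 = assms(1) and c2 = assms(2)
  fix t \<xi> assume t: "t \<in> {0..<t0}" and xi: "\<xi> < q1 c1 c2 t0 0"
  show "((\<lambda>s. yl c1 c2 t0 s \<xi>) has_real_derivative u c1 c2 t0 t (yl c1 c2 t0 t \<xi>)) (at t within {0..t0})"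
  proof -
    have tt: "t < t0" using t by simp
    show ?thesis unfolding yl_u[OF c1 c2 xi tt]
      by (rule has_field_derivative_at_within[OF yl_deriv[OF c1 c2 xi]])
  qed
next
  note c1 = assms(1) and c2 = assms(2)
  fix t \<xi> assume t: "t \<in> {0..<t0}" and xi: "\<xi> > q2 c1 c2 t0 0"
  show "((\<lambda>s. yr c1 c2 t0 s \<xi>) has_real_derivative u c1 c2 t0 t (yr c1 c2 t0 t \<xi>)) (at t within {0..t0})"
  proof -
    have tt: "t < t0" using t by simp
    show ?thesis unfolding yr_u[OF c1 c2 xi tt]
      by (rule has_field_derivative_at_within[OF yr_deriv[OF c1 c2 xi]])
  qed
next
  note c1 = assms(1) and c2 = assms(2)
  fix t \<xi> assume t: "t \<in> {0..<t0}" and xi: "\<xi> < q1 c1 c2 t0 0"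
  have tt: "t < t0" using t by simp
  show "u c1 c2 t0 t (yl c1 c2 t0 t \<xi>) =
          ((c1^2 * exp (- c1 * (t - t0)) - c2^2 * exp (- c2 * (t - t0))) * exp \<xi>)
          / ((c1 - c2) + (c1 * exp (- c1 * (t - t0)) - c1 * exp (c1 * t0)
               - c2 * exp (- c2 * (t - t0)) + c2 * exp (c2 * t0)) * exp \<xi>)"
    using yl_u[OF c1 c2 xi tt] unfolding yl_arg_def .
qed

end
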